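(* The Lie algebra $(\mathcal{APT},\llbracket\cdot,\cdot\rrbracket)$, where $\llbracket X,Y\rrbracket=X\rhd Y-Y\rhd X+[X,Y]$, is a post-Lie-Rinehart algebra over $S(\mathcal{PA})$ with anchor map $\rho$ and connection $\rhd$.
   Context: Work over a fixed ground field. A planar rooted tree is a finite rooted tree, with edges oriented away from the root, together with a total order on the outgoing edges of each vertex; $\mathcal{PT}$ is the span of isomorphism classes of planar rooted trees. $\mathrm{Lie}(\mathcal{PT})$ is the free Lie algebra on $\mathcal{PT}$, with bracket $[\cdot,\cdot]$. For planar trees, $t_1\rhd t_2$ is the sum, over vertices $v$ of $t_2$, of the tree obtained by adding an edge from $v$ to the root of $t_1$ as the leftmost outgoing edge of $v$. It is extended to $\mathrm{Lie}(\mathcal{PT})$ by \[ t_1\rhd[t_2,t_3]=[t_1\rhd t_2,t_3]+[t_2,t_1\rhd t_3], \] \[ [t_1,t_2]\rhd t_3=t_1\rhd(t_2\rhd t_3)-(t_1\rhd t_2)\rhd t_3-t_2\rhd(t_1\rhd t_3)+(t_2\rhd t_1)\rhd t_3. \] A planar aroma is an isomorphism class of finite connected directed graphs (loops allowed) in which each vertex has exactly one incoming edge, with a total order on the outgoing edges at each vertex. $\mathcal{PA}$ is their span and $S(\mathcal{PA})$ is the symmetric algebra. For a planar tree $t$ and a monomial $\alpha\in S(\mathcal{PA})$, $\rho(t)(\alpha)$ is the sum, over all vertices $v$ of all factors of $\alpha$, of the result of adding an edge from $v$ to the root of $t$ as the leftmost outgoing edge of $v$. For Lie polynomials, \[ \rho([t_1,t_2])=\rho(t_1)\rho(t_2)-\rho(t_1\rhd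 t_2)-\rho(t_2)\rho(t_1)+\rho(t_2\rhd t_1). \] Let $\mathcal{APT}=S(\mathcal{PA})\otimes\mathrm{Lie}(\mathcal{PT})$, with elements written $\alpha t$, and define: - $\rho(\alpha t)=\alpha\rho(t)$; - $[\alpha_1t_1,\alpha_2t_2]=\alpha_1\alpha_2[t_1,t_2]$; - $\alpha_1t_1\rhd\alpha_2t_2=\alpha_1\rho(t_1)(\alpha_2)t_2+\alpha_1\alpha_2(t_1\rhd t_2)$. A Lie-Rinehart algebra over a commutative unital algebra $R$ is an $R$-module $L$ with a Lie bracket $\llbracket\cdot,\cdot\rrbracket$ and an $R$-linear Lie morphism $\rho:L\to\mathrm{Der}(R)$ such that $\llbracket X,fY\rrbracket=(\rho(X)f)Y+f\llbracket X,Y\rrbracket$. A connection is a map $(X,Y)\mapsto X\rhd Y$ that is $R$-linear in $X$ and satisfies $X\rhd(fY)=(\rho(X)f)Y+fX\rhd Y$. Its torsion is $T(X,Y)=X\rhd Y-Y\rhd X-\llbracket X,Y\rrbracket$ and its curvature is $\mathcal{R}(X,Y,Z)=X\rhd(Y\rhd Z)-Y\rhd(X\rhd Z)-\llbracket X,Y\rrbracket\rhd Z$. The connection is flat if $\mathcal{R}=0$, and has constant torsion if $X\rhd T(Y,Z)=T(X\rhd Y,Z)+T(Y,X\rhd Z)$ for all $X,Y,Z$. A post-Lie-Rinehart algebra is a Lie-Rinehart algebra endowed with a flat connection that has constant torsion. *)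

theory Defs
  imports Main "HOL-Library.Poly_Mapping" "HOL-Library.Multiset"
begin

definition sc :: "'k::comm_ring_1 \<Rightarrow> ('a \<Rightarrow>\<^sub>0 'k) \<Rightarrow> ('a \<Rightarrow>\<^sub>0 'k)" where
  "sc c q = (\<Sum>y\<in>Poly_Mapping.keys q. Poly_Mapping.single y (c * Poly_Mapping.lookup q y))"

definition lext :: "('a \<Rightarrow> ('b \<Rightarrow>\<^sub>0 'k::comm_ring_1)) \<Rightarrow> ('a \<Rightarrow>\<^sub>0 'k) \<Rightarrow> ('b \<Rightarrow>\<^sub>0 'k)" where
  "lext g p = (\<Sum>x\<in>Poly_Mapping.keys p. sc (Poly_Mapping.lookup p x) (g x))"

definition basis :: "'a \<Rightarrow> ('a \<Rightarrow>\<^sub>0 'k::comm_ring_1)" where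
  "basis x = Poly_Mapping.single x 1"

definition lc_of_list :: "'a list \<Rightarrow> ('a \<Rightarrow>\<^sub>0 'k::comm_ring_1)" where
  "lc_of_list xs = sum_list (map basis xs)"

text \<open>A planar rooted tree is a root together with the ordered list of its subtrees.
  Isomorphism classes of planar rooted trees are exactly the elements of this datatype.\<close>
datatype ptree = PNode "ptree list"

text \<open>graft t s: list (with multiplicity) of the trees obtained by adding an edge from a
  vertex v of s to the root of t as the leftmost outgoing edge of v, one for each vertex v.
  graftL t cs: the same for a forest cs (ordered list of trees), grafting on one vertex
  of one of the trees.\<close>
primrec graft :: "ptree \<Rightarrow> ptree \<Rightarrow> ptree list"
  and graftL :: "ptree \<Rightarrow> ptree list \<Rightarrow> ptree list list" where
  "graft t (PNode cs) = PNode (t # cs) # map PNode (graftL t cs)"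
| "graftL t [] = []"
| "graftL t (c # cs) = map (\<lambda>c'. c' # cs) (graft t c) @ map (\<lambda>cs'. c # cs') (graftL t cs)"

text \<open>A planar aroma is a connected graph in which every vertex has exactly one incoming edge;
  it consists of one oriented cycle with planar trees attached.  A cycle vertex is described by
  the pair (L, R) of the lists of subtrees to the left resp. right of its outgoing cycle edge.
  A raw aroma is the nonempty list of cycle vertices, read along the cycle; isomorphism classes
  are the classes of such lists modulo rotation.\<close>
type_synonym raw_aroma = "(ptree list \<times> ptree list) list"

typedef aroma = "{A :: raw_aroma set. \<exists>xs. xs \<noteq> [] \<and> A = range (\<lambda>n. rotate n xs)}"
  by (rule exI[of _ "range (\<lambda>n. rotate n [([], [])])"]) blast

definition aroma_of :: "raw_aroma \<Rightarrow> aroma" where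
  "aroma_of xs = Abs_aroma (range (\<lambda>n. rotate n xs))"

definition aroma_rep :: "aroma \<Rightarrow> raw_aroma" where
  "aroma_rep A = (SOME xs. xs \<in> Rep_aroma A)"

definition graft_raw :: "ptree \<Rightarrow> raw_aroma \<Rightarrow> raw_aroma list" where
  "graft_raw t xs = concat (map (\<lambda>i. case xs ! i of (l, r) \<Rightarrow>
       [xs[i := (t # l, r)]] @ map (\<lambda>l'. xs[i := (l', r)]) (graftL t l)
                             @ map (\<lambda>r'. xs[i := (l, r')]) (graftL t r)) [0..<length xs])"

definition graft_aroma :: "ptree \<Rightarrow> aroma \<Rightarrow> aroma list" where
  "graft_aroma t A = map aroma_of (graft_raw t (aroma_rep A))"

text \<open>Monomials of S(PA) are finite multisets of planar aromas; the poly_mapping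
  convolution product is the product of the polynomial algebra.\<close>
type_synonym 'k SPA = "aroma multiset \<Rightarrow>\<^sub>0 'k"

definition rho_mono :: "ptree \<Rightarrow> aroma multiset \<Rightarrow> 'k::comm_ring_1 SPA" where
  "rho_mono t m = sum_mset (image_mset (\<lambda>A. lc_of_list
        (map (\<lambda>B. m - {#A#} + {#B#}) (graft_aroma t A))) m)"

definition rho_tree :: "ptree \<Rightarrow> 'k::comm_ring_1 SPA \<Rightarrow> 'k SPA" where
  "rho_tree t = lext (rho_mono t)"

type_synonym 'k TPT = "ptree list \<Rightarrow>\<^sub>0 'k"

definition tmul :: "'k::comm_ring_1 TPT \<Rightarrow> 'k TPT \<Rightarrow> 'k TPT" where
  "tmul F G = lext (\<lambda>u. lext (\<lambda>v. basis (u @ v)) G) F"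

definition tbr :: "'k::comm_ring_1 TPT \<Rightarrow> 'k TPT \<Rightarrow> 'k TPT" where
  "tbr F G = tmul F G - tmul G F"

inductive_set lie_pt :: "'k::comm_ring_1 TPT set" where
  gen: "basis [t] \<in> lie_pt"
| add: "F \<in> lie_pt \<Longrightarrow> G \<in> lie_pt \<Longrightarrow> F + G \<in> lie_pt"
| smul: "F \<in> lie_pt \<Longrightarrow> sc c F \<in> lie_pt"
| br: "F \<in> lie_pt \<Longrightarrow> G \<in> lie_pt \<Longrightarrow> tbr F G \<in> lie_pt"

text \<open>t \<rhd> w for a tree t and a word w: t acts as a derivation (grafting on each letter).\<close>
definition dw :: "ptree \<Rightarrow> ptree list \<Rightarrow> 'k::comm_ring_1 TPT" where
  "dw t w = lc_of_list (concat (map (\<lambda>i. map (\<lambda>s. w[i := s]) (graft t (w ! i))) [0..<length w]))"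

definition dT :: "ptree \<Rightarrow> 'k::comm_ring_1 TPT \<Rightarrow> 'k TPT" where
  "dT t = lext (dw t)"

text \<open>Extension of \<rhd> in the first argument:
  (t w) \<rhd> F = t \<rhd> (w \<rhd> F) - (t \<rhd> w) \<rhd> F; on Lie polynomials this gives
  [x,y] \<rhd> F = x \<rhd> (y \<rhd> F) - (x \<rhd> y) \<rhd> F - y \<rhd> (x \<rhd> F) + (y \<rhd> x) \<rhd> F.\<close>
primrec actN :: "nat \<Rightarrow> ptree list \<Rightarrow> 'k::comm_ring_1 TPT \<Rightarrow> 'k TPT" where
  "actN 0 w F = F"
| "actN (Suc n) w F = (case w of [] \<Rightarrow> F
     | t # w' \<Rightarrow> dT t (actN n w' F) - lext (\<lambda>u. actN n u F) (dw t w'))"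

definition actT :: "'k::comm_ring_1 TPT \<Rightarrow> 'k TPT \<Rightarrow> 'k TPT" where
  "actT G F = lext (\<lambda>u. actN (length u) u F) G"

text \<open>Extension of \<rho> to words:
  \<rho>(t w) = \<rho>(t) \<rho>(w) - \<rho>(t \<rhd> w); on Lie polynomials this gives
  \<rho>([x,y]) = \<rho>(x)\<rho>(y) - \<rho>(x \<rhd> y) - \<rho>(y)\<rho>(x) + \<rho>(y \<rhd> x).\<close>
primrec rhoN :: "nat \<Rightarrow> ptree list \<Rightarrow> 'k::comm_ring_1 SPA \<Rightarrow> 'k SPA" where
  "rhoN 0 w f = f"
| "rhoN (Suc n) w f = (case w of [] \<Rightarrow> f
     | t # w' \<Rightarrow> rho_tree t (rhoN n w' f) - lext (\<lambda>u. rhoN n u f) (dw t w'))"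

definition rhoW :: "ptree list \<Rightarrow> 'k::comm_ring_1 SPA \<Rightarrow> 'k SPA" where
  "rhoW w = rhoN (length w) w"

text \<open>We realise S(PA) \<otimes> T(PT) as finitely supported functions on pairs (monomial, word);
  APT is the subspace S(PA) \<otimes> Lie(PT).\<close>
type_synonym 'k APTT = "(aroma multiset \<times> ptree list) \<Rightarrow>\<^sub>0 'k"

definition tens :: "'k::comm_ring_1 SPA \<Rightarrow> 'k TPT \<Rightarrow> 'k APTT" where
  "tens f G = lext (\<lambda>m. lext (\<lambda>w. basis (m, w)) G) f"

definition rmult :: "'k::comm_ring_1 SPA \<Rightarrow> 'k APTT \<Rightarrow> 'k APTT" where
  "rmult f X = lext (\<lambda>(a, w). tens (f * basis a) (basis w)) X"

inductive_set APT :: "'k::comm_ring_1 APTT set" where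
  zero: "0 \<in> APT"
| add: "X \<in> APT \<Longrightarrow> Y \<in> APT \<Longrightarrow> X + Y \<in> APT"
| gen: "F \<in> lie_pt \<Longrightarrow> tens \<alpha> F \<in> APT"

definition rhoAPT :: "'k::comm_ring_1 APTT \<Rightarrow> 'k SPA \<Rightarrow> 'k SPA" where
  "rhoAPT X f = lext (\<lambda>(a, w). basis a * rhoW w f) X"

definition brAPT :: "'k::comm_ring_1 APTT \<Rightarrow> 'k APTT \<Rightarrow> 'k APTT" where
  "brAPT X Y = lext (\<lambda>(a, u). lext (\<lambda>(b, v).
      tens (basis (a + b)) (tbr (basis u) (basis v))) Y) X"

definition triAPT :: "'k::comm_ring_1 APTT \<Rightarrow> 'k APTT \<Rightarrow> 'k APTT" where
  "triAPT X Y = lext (\<lambda>(a, u). lext (\<lambda>(b, v).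
      tens (basis a * rhoW u (basis b)) (basis v)
      + tens (basis (a + b)) (actT (basis u) (basis v))) Y) X"

definition dbrAPT :: "'k::comm_ring_1 APTT \<Rightarrow> 'k APTT \<Rightarrow> 'k APTT" where
  "dbrAPT X Y = triAPT X Y - triAPT Y X + brAPT X Y"

text \<open>R is a commutative algebra over the ground field (scalar action sR); L is a subset
  (carrier) of an abelian group with scalar action sL, R-action act, bracket br,
  anchor rho and connection tri.\<close>

definition is_derivation :: "('k \<Rightarrow> 'r \<Rightarrow> 'r) \<Rightarrow> ('r::comm_ring_1 \<Rightarrow> 'r) \<Rightarrow> bool" where
  "is_derivation sR D \<longleftrightarrow>
     (\<forall>f g. D (f + g) = D f + D g) \<and> (\<forall>c f. D (sR c f) = sR c (D f)) \<and>
     (\<forall>f g. D (f * g) = D f * g + f * D g)"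

definition lie_rinehart ::
  "('k \<Rightarrow> 'r \<Rightarrow> 'r) \<Rightarrow> 'l::ab_group_add set \<Rightarrow> ('k \<Rightarrow> 'l \<Rightarrow> 'l) \<Rightarrow> ('r \<Rightarrow> 'l \<Rightarrow> 'l)
   \<Rightarrow> ('l \<Rightarrow> 'l \<Rightarrow> 'l) \<Rightarrow> ('l \<Rightarrow> 'r \<Rightarrow> 'r::comm_ring_1) \<Rightarrow> bool" where
  "lie_rinehart sR L sL act br rho \<longleftrightarrow>
     \<comment> \<open>L is an R-module (compatible with the ground field)\<close>
     0 \<in> L \<and>
     (\<forall>X\<in>L. \<forall>Y\<in>L. X + Y \<in> L) \<and> (\<forall>X\<in>L. - X \<in> L) \<and>
     (\<forall>f. \<forall>X\<in>L. act f X \<in> L) \<and>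
     (\<forall>f g. \<forall>X\<in>L. act (f + g) X = act f X + act g X) \<and>
     (\<forall>f. \<forall>X\<in>L. \<forall>Y\<in>L. act f (X + Y) = act f X + act f Y) \<and>
     (\<forall>f g. \<forall>X\<in>L. act (f * g) X = act f (act g X)) \<and>
     (\<forall>X\<in>L. act 1 X = X) \<and>
     (\<forall>c. \<forall>X\<in>L. sL c X = act (sR c 1) X) \<and>
     \<comment> \<open>Lie bracket (bilinear over the ground field, alternating, Jacobi)\<close>
     (\<forall>X\<in>L. \<forall>Y\<in>L. br X Y \<in> L) \<and>
     (\<forall>X\<in>L. \<forall>Y\<in>L. \<forall>Z\<in>L. br (X + Y) Z = br X Z + br Y Z) \<and>
     (\<forall>X\<in>L. \<forall>Y\<in>L. \<forall>Z\<in>L. br X (Y + Z) = br X Y + br X Z) \<and>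
     (\<forall>c. \<forall>X\<in>L. \<forall>Y\<in>L. br (sL c X) Y = sL c (br X Y)) \<and>
     (\<forall>c. \<forall>X\<in>L. \<forall>Y\<in>L. br X (sL c Y) = sL c (br X Y)) \<and>
     (\<forall>X\<in>L. br X X = 0) \<and>
     (\<forall>X\<in>L. \<forall>Y\<in>L. \<forall>Z\<in>L. br X (br Y Z) + br Y (br Z X) + br Z (br X Y) = 0) \<and>
     \<comment> \<open>anchor: R-linear Lie morphism into Der(R)\<close>
     (\<forall>X\<in>L. is_derivation sR (rho X)) \<and>
     (\<forall>X\<in>L. \<forall>Y\<in>L. rho (X + Y) = (\<lambda>g. rho X g + rho Y g)) \<and>
     (\<forall>f. \<forall>X\<in>L. rho (act f X) = (\<lambda>g. f * rho X g)) \<and>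
     (\<forall>X\<in>L. \<forall>Y\<in>L. rho (br X Y) = (\<lambda>g. rho X (rho Y g) - rho Y (rho X g))) \<and>
     \<comment> \<open>Leibniz rule\<close>
     (\<forall>f. \<forall>X\<in>L. \<forall>Y\<in>L. br X (act f Y) = act (rho X f) Y + act f (br X Y))"

definition is_connection ::
  "'l set \<Rightarrow> ('r \<Rightarrow> 'l \<Rightarrow> 'l) \<Rightarrow> ('l \<Rightarrow> 'r \<Rightarrow> 'r::comm_ring_1) \<Rightarrow> ('l::ab_group_add \<Rightarrow> 'l \<Rightarrow> 'l) \<Rightarrow> bool" where
  "is_connection L act rho tri \<longleftrightarrow>
     (\<forall>X\<in>L. \<forall>Y\<in>L. tri X Y \<in> L) \<and>
     (\<forall>X\<in>L. \<forall>X'\<in>L. \<forall>Y\<in>L. tri (X + X') Y = tri X Y + tri X' Y) \<and>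
     (\<forall>f. \<forall>X\<in>L. \<forall>Y\<in>L. tri (act f X) Y = act f (tri X Y)) \<and>
     (\<forall>X\<in>L. \<forall>Y\<in>L. \<forall>Y'\<in>L. tri X (Y + Y') = tri X Y + tri X Y') \<and>
     (\<forall>f. \<forall>X\<in>L. \<forall>Y\<in>L. tri X (act f Y) = act (rho X f) Y + act f (tri X Y))"

definition torsion :: "('l \<Rightarrow> 'l \<Rightarrow> 'l) \<Rightarrow> ('l \<Rightarrow> 'l \<Rightarrow> 'l) \<Rightarrow> 'l \<Rightarrow> 'l \<Rightarrow> 'l::ab_group_add" where
  "torsion br tri X Y = tri X Y - tri Y X - br X Y"

definition curvature :: "('l \<Rightarrow> 'l \<Rightarrow> 'l) \<Rightarrow> ('l \<Rightarrow> 'l \<Rightarrow> 'l) \<Rightarrow> 'l \<Rightarrow> 'l \<Rightarrow> 'l \<Rightarrow> 'l::ab_group_add" where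
  "curvature br tri X Y Z = tri X (tri Y Z) - tri Y (tri X Z) - tri (br X Y) Z"

definition post_lie_rinehart ::
  "('k \<Rightarrow> 'r \<Rightarrow> 'r) \<Rightarrow> 'l set \<Rightarrow> ('k \<Rightarrow> 'l \<Rightarrow> 'l) \<Rightarrow> ('r \<Rightarrow> 'l \<Rightarrow> 'l)
   \<Rightarrow> ('l \<Rightarrow> 'l \<Rightarrow> 'l) \<Rightarrow> ('l \<Rightarrow> 'r \<Rightarrow> 'r::comm_ring_1) \<Rightarrow> ('l::ab_group_add \<Rightarrow> 'l \<Rightarrow> 'l) \<Rightarrow> bool" where
  "post_lie_rinehart sR L sL act br rho tri \<longleftrightarrow>
     lie_rinehart sR L sL act br rho \<and> is_connection L act rho tri \<and>
     (\<forall>X\<in>L. \<forall>Y\<in>L. \<forall>Z\<in>L. curvature br tri X Y Z = 0) \<and>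
     (\<forall>X\<in>L. \<forall>Y\<in>L. \<forall>Z\<in>L.
        tri X (torsion br tri Y Z) = torsion br tri (tri X Y) Z + torsion br tri Y (tri X Z))"

end

theory Submission
  imports Defs
begin


lemma lookup_sc [simp]: "Poly_Mapping.lookup (sc c q) y = c * Poly_Mapping.lookup q y"
proof -
  have "Poly_Mapping.lookup (sc c q) y =
        (\<Sum>x\<in>Poly_Mapping.keys q. Poly_Mapping.lookup (Poly_Mapping.single x (c * Poly_Mapping.lookup q x)) y)"
    by (simp add: sc_def lookup_sum)
  also have "\<dots> = (\<Sum>x\<in>Poly_Mapping.keys q. if x = y then c * Poly_Mapping.lookup q y else 0)"
    by (rule sum.cong) (auto simp: lookup_single)
  also have "\<dots> = c * Poly_Mapping.lookup q y"
    by (auto simp: in_keys_iff)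
  finally show ?thesis .
qed

lemma sc_add_right [simp]: "sc c (p + q) = sc c p + sc c q"
  by (rule poly_mapping_eqI) (simp add: lookup_add algebra_simps)
lemma sc_add_left: "sc (c + d) q = sc c q + sc d q"
  by (rule poly_mapping_eqI) (simp add: lookup_add algebra_simps)
lemma sc_sc [simp]: "sc c (sc d q) = sc (c * d) q"
  by (rule poly_mapping_eqI) (simp add: algebra_simps)
lemma sc_one [simp]: "sc 1 q = q"
  by (rule poly_mapping_eqI) simp
lemma sc_zero_left [simp]: "sc 0 q = 0"
  by (rule poly_mapping_eqI) simp
lemma sc_zero_right [simp]: "sc c 0 = 0"
  by (rule poly_mapping_eqI) simp
lemma sc_minus_right [simp]: "sc c (- q) = - sc c q"
  by (rule poly_mapping_eqI) simp
lemma sc_diff_right [simp]: "sc c (p - q) = sc c p - sc c q"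
  by (rule poly_mapping_eqI) (simp add: lookup_minus algebra_simps)
lemma sc_minus_left: "sc (- c) q = - sc c q"
  by (rule poly_mapping_eqI) simp
lemma sc_single: "sc c (Poly_Mapping.single x d) = Poly_Mapping.single x (c * d)"
  by (rule poly_mapping_eqI) (simp add: lookup_single when_def)
lemma sc_sum: "sc c (sum f A) = (\<Sum>x\<in>A. sc c (f x))"
  by (induction A rule: infinite_finite_induct) auto
lemma sc_sum_list: "sc c (sum_list xs) = sum_list (map (sc c) xs)"
  by (induction xs) auto
lemma single_sc_basis: "Poly_Mapping.single x c = sc c (basis x)"
  by (simp add: basis_def sc_single)

lemma sc_conv_mult: "sc c (q :: 'a::monoid_add \<Rightarrow>\<^sub>0 'k::comm_ring_1) = Poly_Mapping.single 0 c * q"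
proof -
  have "sc c q = Poly_Mapping.map ((*) c) q"
    by (rule poly_mapping_eqI) (simp add: Poly_Mapping.map.rep_eq when_def)
  then show ?thesis by (simp add: mult_map_scale_conv_mult)
qed

lemma sc_mult_left [simp]: "sc c (p :: 'a::comm_monoid_add \<Rightarrow>\<^sub>0 'k::comm_ring_1) * q = sc c (p * q)"
  by (simp add: sc_conv_mult mult.assoc)
lemma sc_mult_right [simp]: "p * sc c (q :: 'a::comm_monoid_add \<Rightarrow>\<^sub>0 'k::comm_ring_1) = sc c (p * q)"
  by (simp add: sc_conv_mult mult.left_commute)

subsection \<open>Induction and linear extension\<close>

lemma pm_induct [case_names zero add]:
  assumes "P 0" and "\<And>p x c. P p \<Longrightarrow> P (Poly_Mapping.single x c + p)"
  shows "P q"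
proof (induction q rule: update_induct)
  case const then show ?case using assms(1) .
next
  case (update f a b)
  have "Poly_Mapping.update a b f = Poly_Mapping.single a b + f"
    using update(1) by (intro poly_mapping_eqI) (auto simp: lookup_update lookup_add lookup_single when_def in_keys_iff)
  then show ?case using assms(2) update by simp
qed

lemma lext_zero [simp]: "lext g 0 = 0"
  by (simp add: lext_def)

lemma lext_add [simp]: "lext g (p + q) = lext g p + lext g q"
  unfolding lext_def
  by (rule setsum_keys_plus_distrib) (simp_all add: sc_add_left)

lemma lext_single [simp]: "lext g (Poly_Mapping.single x c) = sc c (g x)"
  by (simp add: lext_def)

lemma lext_basis [simp]: "lext g (basis x) = g x"
  by (simp add: basis_def)

lemma lext_sc [simp]: "lext g (sc c p) = sc c (lext g p)"
  by (induction p rule: pm_induct) (simp_all add: sc_single)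

lemma lext_minus [simp]: "lext g (- p) = - lext g p"
proof -
  have "lext g p + lext g (- p) = 0" using lext_add[of g p "- p"] by simp
  from minus_unique[OF this] show ?thesis by (rule sym)
qed

lemma lext_diff [simp]: "lext g (p - q) = lext g p - lext g q"
  using lext_add[of g p "- q"] by (simp only: diff_conv_add_uminus lext_minus)

lemma lext_sum: "lext g (sum f A) = (\<Sum>x\<in>A. lext g (f x))"
  by (induction A rule: infinite_finite_induct) auto

lemma lext_sum_list: "lext g (sum_list xs) = sum_list (map (lext g) xs)"
  by (induction xs) auto

lemma lext_cong: "(\<And>x. x \<in> Poly_Mapping.keys p \<Longrightarrow> g x = h x) \<Longrightarrow> lext g p = lext h p"
  by (simp add: lext_def)

lemma lext_fun_add: "lext (\<lambda>x. g x + h x) p = lext g p + lext h p"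
  by (induction p rule: pm_induct) (simp_all)

lemma lext_fun_zero [simp]: "lext (\<lambda>x. 0) p = 0"
  by (induction p rule: pm_induct) (simp_all)

lemma lext_fun_minus: "lext (\<lambda>x. - g x) p = - lext g p"
  by (induction p rule: pm_induct) (simp_all)

lemma lext_fun_diff: "lext (\<lambda>x. g x - h x) p = lext g p - lext h p"
  by (induction p rule: pm_induct) (simp_all add: algebra_simps)

lemma lext_fun_sc: "lext (\<lambda>x. sc c (g x)) p = sc c (lext g p)"
  by (induction p rule: pm_induct) (simp_all add: mult.commute)

lemma lext_basis_id [simp]: "lext basis p = p"
  by (induction p rule: pm_induct) (simp_all add: single_sc_basis)

definition lin :: "(('a \<Rightarrow>\<^sub>0 'k::comm_ring_1) \<Rightarrow> ('b \<Rightarrow>\<^sub>0 'k)) \<Rightarrow> bool" where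
  "lin L \<longleftrightarrow> (\<forall>p q. L (p + q) = L p + L q) \<and> (\<forall>c p. L (sc c p) = sc c (L p))"

lemma linI: "(\<And>p q. L (p + q) = L p + L q) \<Longrightarrow> (\<And>c p. L (sc c p) = sc c (L p)) \<Longrightarrow> lin L"
  by (simp add: lin_def)

lemma lin_lext: "lin L \<Longrightarrow> L p = lext (\<lambda>x. L (basis x)) p"
proof (induction p rule: pm_induct)
  case zero
  have "L (0 + 0) = L 0 + L 0" using zero unfolding lin_def by blast
  then have "L 0 + L 0 = L 0 + 0" by simp
  then show ?case by simp
next
  case (add p x c)
  then show ?case by (simp add: lin_def single_sc_basis)
qed

lemma lin_eq:
  assumes "lin La" "lin Lb" "\<And>x. La (basis x) = Lb (basis x)"
  shows "La p = Lb p"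
proof -
  have e: "(\<lambda>x. La (basis x)) = (\<lambda>x. Lb (basis x))" using assms(3) by (rule ext)
  show ?thesis by (subst lin_lext[OF assms(1)], subst lin_lext[OF assms(2)], simp only: e)
qed

lemma lin_add: "lin L \<Longrightarrow> L (p + q) = L p + L q"
  by (simp add: lin_def)
lemma lin_sc: "lin L \<Longrightarrow> L (sc c p) = sc c (L p)"
  by (simp add: lin_def)
lemma lin_zero: "lin L \<Longrightarrow> L 0 = 0"
  using lin_sc[of L 0 0] by simp
lemma lin_minus: "lin L \<Longrightarrow> L (- p) = - L p"
  using lin_sc[of L "-1" p] by (simp add: sc_minus_left)
lemma lin_diff: "lin L \<Longrightarrow> L (p - q) = L p - L q"
  using lin_add[of L p "- q"] lin_minus[of L q] by simp

lemma lin_lext_fun [simp]: "lin (lext g)"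
  by (rule linI) simp_all

lemma lext_lext: "lext g (lext h p) = lext (\<lambda>x. lext g (h x)) p"
  by (induction p rule: pm_induct) simp_all

lemma lc_of_list_simps [simp]:
  "lc_of_list [] = 0" "lc_of_list (x # xs) = basis x + lc_of_list xs"
  "lc_of_list (xs @ ys) = lc_of_list xs + lc_of_list ys"
  by (simp_all add: lc_of_list_def)

lemma lext_lc_of_list [simp]: "lext g (lc_of_list xs) = sum_list (map g xs)"
  by (induction xs) simp_all

lemma lc_of_list_map: "lc_of_list (map f xs) = lext (\<lambda>x. basis (f x)) (lc_of_list xs)"
  by (induction xs) simp_all

lemma lc_of_list_concat: "lc_of_list (concat xss) = sum_list (map lc_of_list xss)"
  by (induction xss) simp_all

lemma keys_lc_of_list: "Poly_Mapping.keys (lc_of_list xs) \<subseteq> set xs"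
proof (induction xs)
  case Nil then show ?case by simp
next
  case (Cons x xs)
  then show ?case using keys_add[of "basis x" "lc_of_list xs"] by (auto simp: basis_def)
qed


lemma basis_mult [simp]: "(basis a :: 'k::comm_ring_1 SPA) * basis b = basis (a + b)"
  by (simp add: basis_def mult_single)


lemma tmul_basis [simp]: "tmul (basis u) (basis v) = basis (u @ v)"
  by (simp add: tmul_def)

lemma tmul_add_left [simp]: "tmul (F + G) H = tmul F H + tmul G H"
  by (simp add: tmul_def)
lemma tmul_add_right [simp]: "tmul F (G + H) = tmul F G + tmul F H"
  by (simp add: tmul_def lext_fun_add)
lemma tmul_sc_left [simp]: "tmul (sc c F) H = sc c (tmul F H)"
  by (simp add: tmul_def)
lemma tmul_sc_right [simp]: "tmul F (sc c H) = sc c (tmul F H)"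
  by (simp add: tmul_def lext_fun_sc)
lemma tmul_zero_left [simp]: "tmul 0 H = 0"
  by (simp add: tmul_def)
lemma tmul_zero_right [simp]: "tmul F 0 = 0"
  by (simp add: tmul_def)
lemma tmul_minus_left [simp]: "tmul (- F) H = - tmul F H"
  by (simp add: tmul_def)
lemma tmul_minus_right [simp]: "tmul F (- H) = - tmul F H"
  by (simp add: tmul_def lext_fun_minus)
lemma tmul_diff_left [simp]: "tmul (F - G) H = tmul F H - tmul G H"
  by (simp add: tmul_def)
lemma tmul_diff_right [simp]: "tmul F (G - H) = tmul F G - tmul F H"
  by (simp add: tmul_def lext_fun_diff)

lemma tmul_assoc: "tmul (tmul F G) H = tmul F (tmul G H)"
  by (simp add: tmul_def lext_lext)

lemma tmul_Nil_left [simp]: "tmul (basis []) F = F"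
  by (simp add: tmul_def)

lemma tmul_lext_left: "tmul (lext g p) H = lext (\<lambda>x. tmul (g x) H) p"
  by (simp add: tmul_def lext_lext)

lemma tbr_add_left [simp]: "tbr (F + G) H = tbr F H + tbr G H"
  by (simp add: tbr_def)
lemma tbr_add_right [simp]: "tbr F (G + H) = tbr F G + tbr F H"
  by (simp add: tbr_def)
lemma tbr_sc_left [simp]: "tbr (sc c F) H = sc c (tbr F H)"
  by (simp add: tbr_def)
lemma tbr_sc_right [simp]: "tbr F (sc c H) = sc c (tbr F H)"
  by (simp add: tbr_def)
lemma tbr_zero_left [simp]: "tbr 0 H = 0"
  by (simp add: tbr_def)
lemma tbr_zero_right [simp]: "tbr F 0 = 0"
  by (simp add: tbr_def)
lemma tbr_self [simp]: "tbr F F = 0"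
  by (simp add: tbr_def)
lemma tbr_antisym: "tbr G F = - tbr F G"
  by (simp add: tbr_def)
lemma tbr_jacobi: "tbr F (tbr G H) + tbr G (tbr H F) + tbr H (tbr F G) = 0"
  by (simp add: tbr_def tmul_assoc)

subsection \<open>Grafting on words\<close>

lemma lc_map_Cons: "lc_of_list (map (\<lambda>w. x # w) ws) = tmul (basis [x]) (lc_of_list ws)"
  by (induction ws) simp_all

lemma lc_map_snoc: "lc_of_list (map (\<lambda>s. s # w) ss) = tmul (lc_of_list (map (\<lambda>s. [s]) ss)) (basis w)"
  by (induction ss) simp_all

lemma dw_Nil [simp]: "dw t [] = 0"
  by (simp add: dw_def)

lemma dw_single: "dw t [x] = lc_of_list (map (\<lambda>s. [s]) (graft t x))"
  by (simp add: dw_def)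

lemma dw_Cons: "dw t (x # w) = tmul (dw t [x]) (basis w) + tmul (basis [x]) (dw t w)"
proof -
  have u: "[0..<length (x # w)] = 0 # map Suc [0..<length w]"
    by (simp only: length_Cons map_Suc_upt) (rule upt_conv_Cons, simp)
  have e1: "list_update (x # w) 0 = (\<lambda>s. s # w)" by (rule ext) simp
  have e2: "list_update (x # w) (Suc i) = (\<lambda>s. x # w[i := s])" for i by (rule ext) simp
  have "dw t (x # w) = lc_of_list (map (\<lambda>s. s # w) (graft t x)) +
     lc_of_list (concat (map (\<lambda>i. map (\<lambda>s. x # w[i := s]) (graft t (w ! i))) [0..<length w]))"
    unfolding dw_def u by (simp add: comp_def e1 e2)
  also have "lc_of_list (concat (map (\<lambda>i. map (\<lambda>s. x # w[i := s]) (graft t (w ! i))) [0..<length w]))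
     = tmul (basis [x]) (dw t w)"
    unfolding dw_def lc_map_Cons[symmetric]
    by (simp add: map_concat comp_def)
  finally show ?thesis by (subst (asm) lc_map_snoc) (simp only: dw_single)
qed

lemma dw_append: "dw t (u @ v) = tmul (dw t u) (basis v) + tmul (basis u) (dw t v)"
proof (induction u)
  case Nil then show ?case by simp
next
  case (Cons x u)
  have b: "tmul (basis [x]) (tmul (basis u) F) = tmul (basis (x # u)) F" for F
    by (simp add: tmul_assoc[symmetric])
  have 1: "dw t (x # (u @ v)) = tmul (dw t [x]) (basis (u @ v)) + tmul (basis [x]) (dw t (u @ v))"
    by (rule dw_Cons)
  have 2: "dw t (x # u) = tmul (dw t [x]) (basis u) + tmul (basis [x]) (dw t u)"
    by (rule dw_Cons)
  show ?case
    unfolding append_Cons 1 2 Cons.IH by (simp add: tmul_assoc b)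
qed

lemma dT_basis [simp]: "dT t (basis u) = dw t u"
  by (simp add: dT_def)
lemma lin_dT: "lin (dT t)"
  by (simp add: dT_def)
lemma dT_add [simp]: "dT t (F + G) = dT t F + dT t G"
  by (simp add: dT_def)
lemma dT_sc [simp]: "dT t (sc c F) = sc c (dT t F)"
  by (simp add: dT_def)
lemma dT_zero [simp]: "dT t 0 = 0"
  by (simp add: dT_def)
lemma dT_minus [simp]: "dT t (- F) = - dT t F"
  by (simp add: dT_def)
lemma dT_diff [simp]: "dT t (F - G) = dT t F - dT t G"
  by (simp add: dT_def)

lemma lin_tmul_left: "lin (\<lambda>F. tmul F G)"
  by (rule linI) simp_all
lemma lin_tmul_right: "lin (\<lambda>G. tmul F G)"
  by (rule linI) simp_all

lemma dT_tmul: "dT t (tmul F G) = tmul (dT t F) G + tmul F (dT t G)"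
proof -
  have 1: "dT t (tmul (basis u) G) = tmul (dw t u) G + tmul (basis u) (dT t G)" for u
    by (rule lin_eq[where La = "\<lambda>G. dT t (tmul (basis u) G)"], (rule linI; simp)+)
       (simp add: dw_append)
  show ?thesis
    by (rule lin_eq[where La = "\<lambda>F. dT t (tmul F G)"], (rule linI; simp)+) (simp add: 1)
qed

lemma dT_tbr: "dT t (tbr F G) = tbr (dT t F) G + tbr F (dT t G)"
  by (simp add: tbr_def dT_tmul)

lemma keys_dw: "u \<in> Poly_Mapping.keys (dw t w) \<Longrightarrow> length u = length w"
  unfolding dw_def using keys_lc_of_list by fastforce


locale wact =
  fixes E :: "ptree \<Rightarrow> ('a \<Rightarrow>\<^sub>0 'k::comm_ring_1) \<Rightarrow> ('a \<Rightarrow>\<^sub>0 'k)"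
    and N :: "nat \<Rightarrow> ptree list \<Rightarrow> ('a \<Rightarrow>\<^sub>0 'k) \<Rightarrow> ('a \<Rightarrow>\<^sub>0 'k)"
  assumes E_lin: "lin (E t)"
    and N_0: "N 0 w f = f"
    and N_Suc: "N (Suc n) w f = (case w of [] \<Rightarrow> f
          | t # w' \<Rightarrow> E t (N n w' f) - lext (\<lambda>u. N n u f) (dw t w'))"
begin

lemma E_add [simp]: "E t (p + q) = E t p + E t q" by (rule lin_add[OF E_lin])
lemma E_sc [simp]: "E t (sc c p) = sc c (E t p)" by (rule lin_sc[OF E_lin])
lemma E_zero [simp]: "E t 0 = 0" by (rule lin_zero[OF E_lin])
lemma E_minus [simp]: "E t (- p) = - E t p" by (rule lin_minus[OF E_lin])
lemma E_diff [simp]: "E t (p - q) = E t p - E t q" by (rule lin_diff[OF E_lin])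

lemma N_lin: "lin (N n w)"
proof (induction n arbitrary: w)
  case 0 then show ?case by (rule linI) (simp_all add: N_0)
next
  case (Suc n)
  show ?case
  proof (rule linI)
    fix p q show "N (Suc n) w (p + q) = N (Suc n) w p + N (Suc n) w q"
      using Suc lin_add[OF Suc] by (simp add: N_Suc lext_fun_add split: list.split)
  next
    fix c p show "N (Suc n) w (sc c p) = sc c (N (Suc n) w p)"
      using lin_sc[OF Suc] by (simp add: N_Suc lext_fun_sc split: list.split)
  qed
qed

definition W :: "ptree list \<Rightarrow> ('a \<Rightarrow>\<^sub>0 'k) \<Rightarrow> ('a \<Rightarrow>\<^sub>0 'k)" where
  "W u f = N (length u) u f"

lemma W_lin: "lin (W u)"
  unfolding W_def using N_lin by (simp add: lin_def)

lemma W_Nil [simp]: "W [] f = f"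
  by (simp add: W_def N_0)

lemma W_Cons: "W (t # w) f = E t (W w f) - lext (\<lambda>u. W u f) (dw t w)"
proof -
  have "lext (\<lambda>u. N (length w) u f) (dw t w) = lext (\<lambda>u. W u f) (dw t w)"
    by (rule lext_cong) (simp add: W_def keys_dw)
  then show ?thesis by (simp add: W_def N_Suc)
qed

definition Phi :: "'k TPT \<Rightarrow> ('a \<Rightarrow>\<^sub>0 'k) \<Rightarrow> ('a \<Rightarrow>\<^sub>0 'k)" where
  "Phi G f = lext (\<lambda>u. W u f) G"

lemma Phi_basis [simp]: "Phi (basis u) f = W u f"
  by (simp add: Phi_def)

lemma Phi_add_left [simp]: "Phi (G + H) f = Phi G f + Phi H f" by (simp add: Phi_def)
lemma Phi_sc_left [simp]: "Phi (sc c G) f = sc c (Phi G f)" by (simp add: Phi_def)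
lemma Phi_zero_left [simp]: "Phi 0 f = 0" by (simp add: Phi_def)
lemma Phi_minus_left [simp]: "Phi (- G) f = - Phi G f" by (simp add: Phi_def)
lemma Phi_diff_left [simp]: "Phi (G - H) f = Phi G f - Phi H f" by (simp add: Phi_def)

lemma Phi_lin_right: "lin (Phi G)"
  by (rule linI) (simp_all add: Phi_def lin_add[OF W_lin] lin_sc[OF W_lin] lext_fun_add lext_fun_sc)

lemma Phi_add_right [simp]: "Phi G (p + q) = Phi G p + Phi G q" by (rule lin_add[OF Phi_lin_right])
lemma Phi_sc_right [simp]: "Phi G (sc c p) = sc c (Phi G p)" by (rule lin_sc[OF Phi_lin_right])
lemma Phi_zero_right [simp]: "Phi G 0 = 0" by (rule lin_zero[OF Phi_lin_right])
lemma Phi_minus_right [simp]: "Phi G (- p) = - Phi G p" by (rule lin_minus[OF Phi_lin_right])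
lemma Phi_diff_right [simp]: "Phi G (p - q) = Phi G p - Phi G q" by (rule lin_diff[OF Phi_lin_right])

lemma W_single [simp]: "W [t] f = E t f"
  by (simp add: W_Cons)

lemma Phi_Nil [simp]: "Phi (basis []) f = f"
  by simp

lemma Phi_tree [simp]: "Phi (basis [t]) f = E t f"
  by (simp add: W_Cons)

lemma Phi_cons: "Phi (tmul (basis [t]) V) f = E t (Phi V f) - Phi (dT t V) f"
proof -
  have "lin (\<lambda>V. Phi (tmul (basis [t]) V) f)"
    by (rule linI) simp_all
  moreover have "lin (\<lambda>V. E t (Phi V f) - Phi (dT t V) f)"
    by (rule linI) (simp_all add: algebra_simps)
  ultimately show ?thesis
    by (rule lin_eq) (simp add: W_Cons Phi_def)
qed

end

interpretation A: wact dT actN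
  by unfold_locales (simp_all add: lin_dT)

interpretation R: wact rho_tree rhoN
  by unfold_locales (simp_all add: rho_tree_def)

lemma actT_Phi: "actT = A.Phi"
  by (intro ext) (simp add: actT_def A.Phi_def A.W_def)


context wact
begin

lemma Phi_step:
  assumes hH: "\<And>V f. Phi (tmul H V) f = Phi H (Phi V f) - Phi (A.Phi H V) f"
    and hK: "\<And>V f. Phi (tmul K V) f = Phi K (Phi V f) - Phi (A.Phi K V) f"
    and hHK: "\<And>V f. Phi (tmul (A.Phi H K) V) f = Phi (A.Phi H K) (Phi V f) - Phi (A.Phi (A.Phi H K) V) f"
    and hKH: "\<And>V f. Phi (tmul (A.Phi K H) V) f = Phi (A.Phi K H) (Phi V f) - Phi (A.Phi (A.Phi K H) V) f"
    and aH: "\<And>V X. A.Phi (tmul H V) X = A.Phi H (A.Phi V X) - A.Phi (A.Phi H V) X"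
    and aK: "\<And>V X. A.Phi (tmul K V) X = A.Phi K (A.Phi V X) - A.Phi (A.Phi K V) X"
    and dH: "\<And>U V. A.Phi H (tmul U V) = tmul (A.Phi H U) V + tmul U (A.Phi H V)"
    and dK: "\<And>U V. A.Phi K (tmul U V) = tmul (A.Phi K U) V + tmul U (A.Phi K V)"
  shows "Phi (tmul (tbr H K) V) f = Phi (tbr H K) (Phi V f) - Phi (A.Phi (tbr H K) V) f"
proof -
  have l: "Phi (tmul (tbr H K) V) f = Phi (tmul H (tmul K V)) f - Phi (tmul K (tmul H V)) f"
    by (simp add: tbr_def tmul_assoc)
  have 1: "Phi (tmul H (tmul K V)) f = Phi H (Phi K (Phi V f)) - Phi H (Phi (A.Phi K V) f)
      - Phi (A.Phi H K) (Phi V f) + Phi (A.Phi (A.Phi H K) V) f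
      - Phi K (Phi (A.Phi H V) f) + Phi (A.Phi K (A.Phi H V)) f"
    by (simp add: hH hK dH hHK)
  have 2: "Phi (tmul K (tmul H V)) f = Phi K (Phi H (Phi V f)) - Phi K (Phi (A.Phi H V) f)
      - Phi (A.Phi K H) (Phi V f) + Phi (A.Phi (A.Phi K H) V) f
      - Phi H (Phi (A.Phi K V) f) + Phi (A.Phi H (A.Phi K V)) f"
    by (simp add: hH hK dK hKH)
  have 3: "Phi (tbr H K) x = Phi H (Phi K x) - Phi (A.Phi H K) x - Phi K (Phi H x) + Phi (A.Phi K H) x" for x
    by (simp add: tbr_def hH hK)
  have 4: "A.Phi (tbr H K) V = A.Phi H (A.Phi K V) - A.Phi (A.Phi H K) V - A.Phi K (A.Phi H V) + A.Phi (A.Phi K H) V"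
    by (simp add: tbr_def aH aK)
  show ?thesis
    unfolding l 1 2 3 4 by (simp add: algebra_simps)
qed

end

subsection \<open>The anchor of a tree is a derivation\<close>

lemma lc_map_mult:
  "(lc_of_list (map (\<lambda>B. k B + m) L) :: 'k::comm_ring_1 SPA) = lc_of_list (map k L) * basis m"
  by (induction L) (simp_all add: distrib_right)

lemma lc_map_mult':
  "(lc_of_list (map (\<lambda>B. m + k B) L) :: 'k::comm_ring_1 SPA) = basis m * lc_of_list (map k L)"
  by (induction L) (simp_all add: distrib_left)

lemma rho_mono_add:
  "(rho_mono t (m1 + m2) :: 'k::comm_ring_1 SPA) = rho_mono t m1 * basis m2 + basis m1 * rho_mono t m2"
proof -
  define h :: "aroma multiset \<Rightarrow> aroma \<Rightarrow> 'k SPA" where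
    "h m A = lc_of_list (map (\<lambda>B. m - {#A#} + {#B#}) (graft_aroma t A))" for m A
  have r: "rho_mono t m = (\<Sum>A\<in>#m. h m A)" for m
    by (simp add: rho_mono_def h_def)
  have 1: "h (m1 + m2) A = h m1 A * basis m2" if Am: "A \<in># m1" for A
  proof -
    obtain m' where m': "m1 = add_mset A m'" using multi_member_split[OF Am] by blast
    have "m1 + m2 - {#A#} + {#B#} = (m1 - {#A#} + {#B#}) + m2" for B
      unfolding m' by (simp add: add.commute add.left_commute)
    then show ?thesis by (simp add: h_def lc_map_mult[symmetric])
  qed
  have 2: "h (m1 + m2) A = basis m1 * h m2 A" if Am: "A \<in># m2" for A
  proof -
    obtain m' where m': "m2 = add_mset A m'" using multi_member_split[OF Am] by blast
    have "m1 + m2 - {#A#} + {#B#} = m1 + (m2 - {#A#} + {#B#})" for B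
      unfolding m' by (simp add: add.commute add.left_commute)
    then show ?thesis by (simp add: h_def lc_map_mult'[symmetric])
  qed
  have "rho_mono t (m1 + m2) = (\<Sum>A\<in>#m1. h (m1 + m2) A) + (\<Sum>A\<in>#m2. h (m1 + m2) A)"
    by (simp add: r)
  also have "(\<Sum>A\<in>#m1. h (m1 + m2) A) = (\<Sum>A\<in>#m1. h m1 A * basis m2)"
    by (rule arg_cong[where f = sum_mset], rule image_mset_cong, rule 1)
  also have "(\<Sum>A\<in>#m2. h (m1 + m2) A) = (\<Sum>A\<in>#m2. basis m1 * h m2 A)"
    by (rule arg_cong[where f = sum_mset], rule image_mset_cong, rule 2)
  finally show ?thesis
    by (simp only: r sum_mset_distrib_left sum_mset_distrib_right)
qed

lemma rho_tree_basis [simp]: "rho_tree t (basis m) = rho_mono t m"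
  by (simp add: rho_tree_def)

lemma rho_tree_der:
  "rho_tree t (f * g :: 'k::comm_ring_1 SPA) = rho_tree t f * g + f * rho_tree t g"
proof -
  have b: "rho_tree t (basis m * g) = rho_mono t m * g + basis m * rho_tree t g" for m
    by (rule lin_eq[where La = "\<lambda>g. rho_tree t (basis m * g)"], (rule linI; simp add: rho_tree_def distrib_left)+)
       (simp add: rho_mono_add)
  show ?thesis
    by (rule lin_eq[where La = "\<lambda>f. rho_tree t (f * g)"], (rule linI; simp add: rho_tree_def distrib_left distrib_right)+)
       (simp add: b)
qed

inductive LM :: "nat \<Rightarrow> 'k::comm_ring_1 TPT \<Rightarrow> bool" where
  LM_tree: "LM 1 (basis [t])"
| LM_zero: "LM d 0"
| LM_add: "LM d F \<Longrightarrow> LM d G \<Longrightarrow> LM d (F + G)"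
| LM_sc: "LM d F \<Longrightarrow> LM d (sc c F)"
| LM_br: "LM d1 F \<Longrightarrow> LM d2 G \<Longrightarrow> 0 < d1 \<Longrightarrow> 0 < d2 \<Longrightarrow> LM (d1 + d2) (tbr F G)"

lemma LM_diff: "LM d F \<Longrightarrow> LM d G \<Longrightarrow> LM d (F - G)"
  using LM_add[OF _ LM_sc[of d G "-1"], of F] by (simp add: sc_minus_left)

lemma LM_tree': "LM (Suc 0) (basis [t])"
  using LM_tree by simp

lemma LM_lc: "LM 1 (lc_of_list (map (\<lambda>s. [s]) L))"
  by (induction L) (auto intro: LM_add LM_tree' LM_zero)

definition Qp :: "'k::comm_ring_1 TPT \<Rightarrow> bool" where
  "Qp G \<longleftrightarrow> (\<forall>U V. A.Phi G (tmul U V) = tmul (A.Phi G U) V + tmul U (A.Phi G V))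
   \<and> (\<forall>e F. LM e F \<longrightarrow> LM e (A.Phi G F))
   \<and> (\<forall>V X. A.Phi (tmul G V) X = A.Phi G (A.Phi V X) - A.Phi (A.Phi G V) X)
   \<and> (\<forall>V f. R.Phi (tmul G V) f = R.Phi G (R.Phi V f) - R.Phi (A.Phi G V) f)
   \<and> (\<forall>f g. R.Phi G (f * g) = R.Phi G f * g + f * R.Phi G g)"

lemma Qp_zero: "Qp 0"
  by (simp add: Qp_def LM_zero)

lemma Qp_add: "Qp G \<Longrightarrow> Qp H \<Longrightarrow> Qp (G + H)"
  unfolding Qp_def by (auto simp: algebra_simps intro: LM_add)

lemma Qp_sc: "Qp G \<Longrightarrow> Qp (sc c G)"
  unfolding Qp_def by (auto intro: LM_sc)

lemma Qp_tree:
  shows "Qp (basis [t] :: 'k::comm_ring_1 TPT)"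
  unfolding Qp_def
proof (intro conjI allI impI)
  fix U V :: "'k TPT"
  show "A.Phi (basis [t]) (tmul U V) = tmul (A.Phi (basis [t]) U) V + tmul U (A.Phi (basis [t]) V)"
    by (simp add: dT_tmul)
next
  fix e and F :: "'k TPT"
  assume "LM e F"
  then show "LM e (A.Phi (basis [t]) F)"
  proof (induction rule: LM.induct)
    case (LM_tree s) then show ?case using LM_lc[of "graft t s"] by (simp add: dw_single)
  next
    case (LM_zero d) then show ?case by (simp add: LM.LM_zero)
  next
    case (LM_add d F G) then show ?case by (simp add: LM.LM_add)
  next
    case (LM_sc d F c) then show ?case by (simp add: LM.LM_sc)
  next
    case (LM_br d1 F d2 G) then show ?case by (simp add: dT_tbr LM.LM_add LM.LM_br)
  qed
next
  fix V X :: "'k TPT"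
  show "A.Phi (tmul (basis [t]) V) X = A.Phi (basis [t]) (A.Phi V X) - A.Phi (A.Phi (basis [t]) V) X"
    by (simp add: A.Phi_cons)
next
  fix V :: "'k TPT" and f :: "'k SPA"
  show "R.Phi (tmul (basis [t]) V) f = R.Phi (basis [t]) (R.Phi V f) - R.Phi (A.Phi (basis [t]) V) f"
    by (simp add: R.Phi_cons)
next
  fix f g :: "'k SPA"
  show "R.Phi (basis [t]) (f * g) = R.Phi (basis [t]) f * g + f * R.Phi (basis [t]) g"
    by (simp add: rho_tree_der)
qed

lemma Qp_br:
  assumes H: "Qp H" and K: "Qp K" and HK: "Qp (A.Phi H K)" and KH: "Qp (A.Phi K H)"
  shows "Qp (tbr H K)"
proof -
  note dH = H[unfolded Qp_def, THEN conjunct1, rule_format]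
  note lH = H[unfolded Qp_def, THEN conjunct2, THEN conjunct1, rule_format]
  note aH = H[unfolded Qp_def, THEN conjunct2, THEN conjunct2, THEN conjunct1, rule_format]
  note rH = H[unfolded Qp_def, THEN conjunct2, THEN conjunct2, THEN conjunct2, THEN conjunct1, rule_format]
  note pH = H[unfolded Qp_def, THEN conjunct2, THEN conjunct2, THEN conjunct2, THEN conjunct2, rule_format]
  note dK = K[unfolded Qp_def, THEN conjunct1, rule_format]
  note lK = K[unfolded Qp_def, THEN conjunct2, THEN conjunct1, rule_format]
  note aK = K[unfolded Qp_def, THEN conjunct2, THEN conjunct2, THEN conjunct1, rule_format]
  note rK = K[unfolded Qp_def, THEN conjunct2, THEN conjunct2, THEN conjunct2, THEN conjunct1, rule_format]
  note pK = K[unfolded Qp_def, THEN conjunct2, THEN conjunct2, THEN conjunct2, THEN conjunct2, rule_format]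
  note dHK = HK[unfolded Qp_def, THEN conjunct1, rule_format]
  note lHK = HK[unfolded Qp_def, THEN conjunct2, THEN conjunct1, rule_format]
  note aHK = HK[unfolded Qp_def, THEN conjunct2, THEN conjunct2, THEN conjunct1, rule_format]
  note rHK = HK[unfolded Qp_def, THEN conjunct2, THEN conjunct2, THEN conjunct2, THEN conjunct1, rule_format]
  note pHK = HK[unfolded Qp_def, THEN conjunct2, THEN conjunct2, THEN conjunct2, THEN conjunct2, rule_format]
  note dKH = KH[unfolded Qp_def, THEN conjunct1, rule_format]
  note lKH = KH[unfolded Qp_def, THEN conjunct2, THEN conjunct1, rule_format]
  note aKH = KH[unfolded Qp_def, THEN conjunct2, THEN conjunct2, THEN conjunct1, rule_format]
  note rKH = KH[unfolded Qp_def, THEN conjunct2, THEN conjunct2, THEN conjunct2, THEN conjunct1, rule_format]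
  note pKH = KH[unfolded Qp_def, THEN conjunct2, THEN conjunct2, THEN conjunct2, THEN conjunct2, rule_format]
  have fA: "A.Phi (tbr H K) X = A.Phi H (A.Phi K X) - A.Phi (A.Phi H K) X - A.Phi K (A.Phi H X) + A.Phi (A.Phi K H) X" for X
    by (simp add: tbr_def aH aK)
  have fR: "R.Phi (tbr H K) x = R.Phi H (R.Phi K x) - R.Phi (A.Phi H K) x - R.Phi K (R.Phi H x) + R.Phi (A.Phi K H) x" for x
    by (simp add: tbr_def rH rK)
  show ?thesis
    unfolding Qp_def
  proof (intro conjI allI impI)
    fix U V :: "'a TPT"
    show "A.Phi (tbr H K) (tmul U V) = tmul (A.Phi (tbr H K) U) V + tmul U (A.Phi (tbr H K) V)"
      unfolding fA by (simp add: dH dK dHK dKH algebra_simps)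
  next
    fix e F assume "LM e (F :: 'a TPT)"
    then show "LM e (A.Phi (tbr H K) F)"
      unfolding fA by (intro LM_add LM_diff lH lK lHK lKH)
  next
    fix V X :: "'a TPT"
    show "A.Phi (tmul (tbr H K) V) X = A.Phi (tbr H K) (A.Phi V X) - A.Phi (A.Phi (tbr H K) V) X"
      by (rule A.Phi_step[OF aH aK aHK aKH aH aK dH dK])
  next
    fix V :: "'a TPT" and f
    show "R.Phi (tmul (tbr H K) V) f = R.Phi (tbr H K) (R.Phi V f) - R.Phi (A.Phi (tbr H K) V) f"
      by (rule R.Phi_step[OF rH rK rHK rKH aH aK dH dK])
  next
    fix f g :: "'a SPA"
    show "R.Phi (tbr H K) (f * g) = R.Phi (tbr H K) f * g + f * R.Phi (tbr H K) g"
      unfolding fR by (simp add: pH pK pHK pKH algebra_simps)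
  qed
qed


lemma Qp_LM2: "Qp (A.Phi H K) \<and> Qp (A.Phi K H) \<Longrightarrow> Qp H \<Longrightarrow> Qp K \<Longrightarrow> Qp (tbr H K)"
  using Qp_br by blast

lemma Qp_lM: "Qp G \<Longrightarrow> LM e F \<Longrightarrow> LM e (A.Phi G F)"
  unfolding Qp_def by blast

lemma LM_Qp: "LM d (G :: 'k::comm_ring_1 TPT) \<Longrightarrow> Qp G"
proof (induction d arbitrary: G rule: less_induct)
  case (less d)
  have "d' \<le> d \<Longrightarrow> Qp G'" if "LM d' (G' :: 'k TPT)" for d' G'
    using that
  proof (induction rule: LM.induct)
    case (LM_tree t) show ?case by (rule Qp_tree)
  next
    case (LM_zero d) show ?case by (rule Qp_zero)
  next
    case (LM_add d F G) then show ?case by (simp add: Qp_add)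
  next
    case (LM_sc d F c) then show ?case by (simp add: Qp_sc)
  next
    case (LM_br d1 F d2 G)
    have F: "Qp F" and G: "Qp G" using LM_br by auto
    have "Qp (A.Phi F G)"
      by (rule less.IH[of d2]) (use LM_br in \<open>auto intro: Qp_lM[OF F]\<close>)
    moreover have "Qp (A.Phi G F)"
      by (rule less.IH[of d1]) (use LM_br in \<open>auto intro: Qp_lM[OF G]\<close>)
    ultimately show ?case using Qp_br F G by blast
  qed
  then show ?case using less.prems by blast
qed

inductive LS :: "'k::comm_ring_1 TPT \<Rightarrow> bool" where
  LS_zero: "LS 0"
| LS_cons: "LM d F \<Longrightarrow> LS G \<Longrightarrow> LS (F + G)"

lemma LS_LM: "LM d F \<Longrightarrow> LS F"
  using LS_cons[OF _ LS_zero] by fastforce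

lemma LS_add: "LS F \<Longrightarrow> LS G \<Longrightarrow> LS (F + G)"
  by (induction rule: LS.induct) (auto simp: add.assoc intro: LS.intros)

lemma LS_sc: "LS F \<Longrightarrow> LS (sc c F)"
  by (induction rule: LS.induct) (auto intro: LS.intros LM_sc)

lemma LM0: "LM d F \<Longrightarrow> d = 0 \<Longrightarrow> F = 0"
  by (induction rule: LM.induct) auto

lemma LM_tbr_LS: "LS G \<Longrightarrow> LM d F \<Longrightarrow> LS (tbr F G)"
proof (induction rule: LS.induct)
  case LS_zero then show ?case by (simp add: LS.LS_zero)
next
  case (LS_cons d' F' G)
  have "LM (d + d') (tbr F F')"
  proof (cases "d = 0 \<or> d' = 0")
    case True
    then have "F = 0 \<or> F' = 0" using LM0 LS_cons by blast
    then have "tbr F F' = 0" by auto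
    then show ?thesis by (simp add: LM_zero)
  next
    case False
    then show ?thesis using LS_cons by (intro LM_br) auto
  qed
  then show ?case using LS_cons by (simp add: LS.LS_cons)
qed

lemma LS_tbr: "LS F \<Longrightarrow> LS G \<Longrightarrow> LS (tbr F G)"
  by (induction rule: LS.induct) (auto intro: LS.intros LS_add LM_tbr_LS)

lemma lie_LS: "F \<in> lie_pt \<Longrightarrow> LS F"
  by (induction rule: lie_pt.induct) (auto intro: LS_LM LM_tree LS_add LS_sc LS_tbr)

lemma LM_lie: "LM d F \<Longrightarrow> F \<in> lie_pt"
proof (induction rule: LM.induct)
  case (LM_zero d)
  have "sc 0 (basis [PNode []]) \<in> lie_pt" by (intro lie_pt.intros)
  then show ?case by simp
qed (auto intro: lie_pt.intros)

lemma LS_lie: "LS F \<Longrightarrow> F \<in> lie_pt"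
proof (induction rule: LS.induct)
  case LS_zero
  have "sc 0 (basis [PNode []]) \<in> lie_pt" by (intro lie_pt.intros)
  then show ?case by simp
qed (auto intro: lie_pt.intros LM_lie)

lemma zero_lie: "0 \<in> lie_pt"
  by (rule LS_lie[OF LS_zero])

lemma LS_Qp: "LS F \<Longrightarrow> Qp F"
  by (induction rule: LS.induct) (auto intro: Qp_zero Qp_add LM_Qp)

lemma lie_Qp: "F \<in> lie_pt \<Longrightarrow> Qp F"
  by (intro LS_Qp lie_LS)

lemma lie_act: "F \<in> lie_pt \<Longrightarrow> G \<in> lie_pt \<Longrightarrow> A.Phi F G \<in> lie_pt"
proof -
  assume F: "F \<in> lie_pt" and "G \<in> lie_pt"
  then have "LS G" by (intro lie_LS)
  then show ?thesis
  proof (induction rule: LS.induct)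
    case LS_zero then show ?case by (simp add: zero_lie)
  next
    case (LS_cons d F' G')
    have "LM d (A.Phi F F')" by (rule Qp_lM[OF lie_Qp[OF F] LS_cons(1)])
    then show ?case using LS_cons by (auto intro: lie_pt.intros LM_lie)
  qed
qed

lemma lie_der: "F \<in> lie_pt \<Longrightarrow> A.Phi F (tmul U V) = tmul (A.Phi F U) V + tmul U (A.Phi F V)"
  using lie_Qp unfolding Qp_def by blast
lemma lie_comp: "F \<in> lie_pt \<Longrightarrow> A.Phi (tmul F V) X = A.Phi F (A.Phi V X) - A.Phi (A.Phi F V) X"
  using lie_Qp unfolding Qp_def by blast
lemma lie_rcomp: "F \<in> lie_pt \<Longrightarrow> R.Phi (tmul F V) f = R.Phi F (R.Phi V f) - R.Phi (A.Phi F V) f"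
  using lie_Qp unfolding Qp_def by blast
lemma lie_rder: "F \<in> lie_pt \<Longrightarrow> R.Phi F (f * g) = R.Phi F f * g + f * R.Phi F g"
  using lie_Qp unfolding Qp_def by blast

lemma lie_tbr_der: "F \<in> lie_pt \<Longrightarrow> A.Phi F (tbr U V) = tbr (A.Phi F U) V + tbr U (A.Phi F V)"
  by (simp add: tbr_def lie_der)

lemma lie_act_tbr: "F \<in> lie_pt \<Longrightarrow> G \<in> lie_pt \<Longrightarrow>
   A.Phi (tbr F G) X = A.Phi F (A.Phi G X) - A.Phi (A.Phi F G) X - A.Phi G (A.Phi F X) + A.Phi (A.Phi G F) X"
  by (simp add: tbr_def lie_comp)

lemma lie_rho_tbr: "F \<in> lie_pt \<Longrightarrow> G \<in> lie_pt \<Longrightarrow>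
   R.Phi (tbr F G) x = R.Phi F (R.Phi G x) - R.Phi (A.Phi F G) x - R.Phi G (R.Phi F x) + R.Phi (A.Phi G F) x"
  by (simp add: tbr_def lie_rcomp)


lemma lext_split_add [simp]:
  "lext (\<lambda>(a, u). P a u + Q a u) X = lext (\<lambda>(a, u). P a u) X + lext (\<lambda>(a, u). Q a u) X"
  by (induction X rule: pm_induct) (simp_all add: split_def)

lemma lext_split_sc [simp]:
  "lext (\<lambda>(a, u). sc c (P a u)) X = sc c (lext (\<lambda>(a, u). P a u) X)"
  by (induction X rule: pm_induct) (simp_all add: split_def mult.commute)

lemma lext_split_zero [simp]:
  "lext (\<lambda>(a, u). 0) X = 0"
  by (induction X rule: pm_induct) (simp_all add: split_def)

lemma lext_split_minus [simp]:
  "lext (\<lambda>(a, u). - P a u) X = - lext (\<lambda>(a, u). P a u) X"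
  by (induction X rule: pm_induct) (simp_all add: split_def)

lemma lext_split_diff [simp]:
  "lext (\<lambda>(a, u). P a u - Q a u) X = lext (\<lambda>(a, u). P a u) X - lext (\<lambda>(a, u). Q a u) X"
  by (induction X rule: pm_induct) (simp_all add: split_def algebra_simps)

lemma tens_basis [simp]: "tens (basis m) (basis w) = basis (m, w)"
  by (simp add: tens_def)
lemma tens_add_left [simp]: "tens (f + g) G = tens f G + tens g G"
  by (simp add: tens_def)
lemma tens_sc_left [simp]: "tens (sc c f) G = sc c (tens f G)"
  by (simp add: tens_def)
lemma tens_zero_left [simp]: "tens 0 G = 0"
  by (simp add: tens_def)
lemma tens_minus_left [simp]: "tens (- f) G = - tens f G"
  by (simp add: tens_def)
lemma tens_diff_left [simp]: "tens (f - g) G = tens f G - tens g G"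
  by (simp add: tens_def)
lemma tens_add_right [simp]: "tens f (G + H) = tens f G + tens f H"
  by (simp add: tens_def lext_fun_add)
lemma tens_sc_right [simp]: "tens f (sc c G) = sc c (tens f G)"
  by (simp add: tens_def lext_fun_sc)
lemma tens_zero_right [simp]: "tens f 0 = 0"
  by (simp add: tens_def)
lemma tens_minus_right [simp]: "tens f (- G) = - tens f G"
  by (simp add: tens_def lext_fun_minus)
lemma tens_diff_right [simp]: "tens f (G - H) = tens f G - tens f H"
  by (simp add: tens_def lext_fun_diff)

lemma rmult_add_right [simp]: "rmult f (X + Y) = rmult f X + rmult f Y" by (simp add: rmult_def)
lemma rmult_sc_right [simp]: "rmult f (sc c X) = sc c (rmult f X)" by (simp add: rmult_def)
lemma rmult_zero_right [simp]: "rmult f 0 = 0" by (simp add: rmult_def)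
lemma rmult_minus_right [simp]: "rmult f (- X) = - rmult f X" by (simp add: rmult_def)
lemma rmult_diff_right [simp]: "rmult f (X - Y) = rmult f X - rmult f Y" by (simp add: rmult_def)
lemma rmult_basis [simp]: "rmult f (basis (a, w)) = tens (f * basis a) (basis w)" by (simp add: rmult_def)

lemma rmult_add_left [simp]: "rmult (f + g) X = rmult f X + rmult g X"
  by (simp add: rmult_def distrib_right)
lemma rmult_sc_left [simp]: "rmult (sc c f) X = sc c (rmult f X)"
  by (simp add: rmult_def)

lemma lin_rmult: "lin (rmult f)" by (rule linI) simp_all

lemma rmult_tens: "rmult f (tens \<alpha> U) = tens (f * \<alpha>) U"
proof -
  have b: "rmult f (tens (basis a) U) = tens (f * basis a) U" for a
    by (rule lin_eq[where La = "\<lambda>U. rmult f (tens (basis a) U)"], (rule linI; simp)+) simp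
  show ?thesis
    by (rule lin_eq[where La = "\<lambda>\<alpha>. rmult f (tens \<alpha> U)"], (rule linI; simp add: distrib_left)+) (simp add: b)
qed

lemma rmult_mult: "rmult (f * g) X = rmult f (rmult g X)"
  by (rule lin_eq[where La = "rmult (f * g)"], (rule linI; simp)+) (auto simp: rmult_tens mult.assoc)

lemma rmult_one: "rmult 1 X = X"
  by (rule lin_eq[where La = "rmult 1"], (rule linI; simp)+) auto

lemma sc_rmult: "sc c X = rmult (sc c 1) X"
  by (rule lin_eq[where La = "sc c"], (rule linI; simp add: mult.commute)+) auto


lemma rhoW_eq: "rhoW = R.W"
  by (intro ext) (simp add: rhoW_def R.W_def)

lemma actT_eq: "actT = A.Phi"
  by (rule actT_Phi)

lemma rho_add_left [simp]: "rhoAPT (X + Y) g = rhoAPT X g + rhoAPT Y g" by (simp add: rhoAPT_def)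
lemma rho_sc_left [simp]: "rhoAPT (sc c X) g = sc c (rhoAPT X g)" by (simp add: rhoAPT_def)
lemma rho_zero_left [simp]: "rhoAPT 0 g = 0" by (simp add: rhoAPT_def)
lemma rho_minus_left [simp]: "rhoAPT (- X) g = - rhoAPT X g" by (simp add: rhoAPT_def)
lemma rho_diff_left [simp]: "rhoAPT (X - Y) g = rhoAPT X g - rhoAPT Y g" by (simp add: rhoAPT_def)
lemma rho_basis [simp]: "rhoAPT (basis (a, w)) g = basis a * R.W w g" by (simp add: rhoAPT_def rhoW_eq)

lemma rho_add_right [simp]: "rhoAPT X (f + g) = rhoAPT X f + rhoAPT X g"
  by (simp add: rhoAPT_def rhoW_eq lin_add[OF R.W_lin] distrib_left)
lemma rho_sc_right [simp]: "rhoAPT X (sc c f) = sc c (rhoAPT X f)"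
  by (simp add: rhoAPT_def rhoW_eq lin_sc[OF R.W_lin])
lemma lin_rho_right: "lin (rhoAPT X)" by (rule linI) simp_all
lemma rho_zero_right [simp]: "rhoAPT X 0 = 0" by (rule lin_zero[OF lin_rho_right])
lemma rho_minus_right [simp]: "rhoAPT X (- f) = - rhoAPT X f" by (rule lin_minus[OF lin_rho_right])
lemma rho_diff_right [simp]: "rhoAPT X (f - g) = rhoAPT X f - rhoAPT X g" by (rule lin_diff[OF lin_rho_right])

lemma rho_tens: "rhoAPT (tens \<alpha> U) g = \<alpha> * R.Phi U g"
proof -
  have b: "rhoAPT (tens (basis a) U) g = basis a * R.Phi U g" for a
    by (rule lin_eq[where La = "\<lambda>U. rhoAPT (tens (basis a) U) g"], (rule linI; simp add: distrib_left)+) simp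
  show ?thesis
    by (rule lin_eq[where La = "\<lambda>\<alpha>. rhoAPT (tens \<alpha> U) g"], (rule linI; simp add: distrib_right)+) (simp add: b)
qed

lemma br_add_left [simp]: "brAPT (X + Y) Z = brAPT X Z + brAPT Y Z" by (simp add: brAPT_def)
lemma br_sc_left [simp]: "brAPT (sc c X) Z = sc c (brAPT X Z)" by (simp add: brAPT_def)
lemma br_zero_left [simp]: "brAPT 0 Z = 0" by (simp add: brAPT_def)
lemma br_minus_left [simp]: "brAPT (- X) Z = - brAPT X Z" by (simp add: brAPT_def)
lemma br_diff_left [simp]: "brAPT (X - Y) Z = brAPT X Z - brAPT Y Z" by (simp add: brAPT_def)
lemma br_add_right [simp]: "brAPT X (Y + Z) = brAPT X Y + brAPT X Z" by (simp add: brAPT_def)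
lemma br_sc_right [simp]: "brAPT X (sc c Y) = sc c (brAPT X Y)" by (simp add: brAPT_def)
lemma br_zero_right [simp]: "brAPT X 0 = 0" by (simp add: brAPT_def)
lemma br_minus_right [simp]: "brAPT X (- Y) = - brAPT X Y" by (simp add: brAPT_def)
lemma br_diff_right [simp]: "brAPT X (Y - Z) = brAPT X Y - brAPT X Z" by (simp add: brAPT_def)
lemma br_basis [simp]: "brAPT (basis (a, u)) (basis (b, v)) = tens (basis (a + b)) (tbr (basis u) (basis v))"
  by (simp add: brAPT_def)

lemma br_tens: "brAPT (tens \<alpha> U) (tens \<beta> V) = tens (\<alpha> * \<beta>) (tbr U V)"
proof -
  have 1: "brAPT (basis (a, u)) (tens (basis b) V) = tens (basis a * basis b) (tbr (basis u) V)" for a u b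
    by (rule lin_eq[where La = "\<lambda>V. brAPT (basis (a, u)) (tens (basis b) V)"], (rule linI; simp)+) simp
  have 2: "brAPT (basis (a, u)) (tens \<beta> V) = tens (basis a * \<beta>) (tbr (basis u) V)" for a u
    by (rule lin_eq[where La = "\<lambda>\<beta>. brAPT (basis (a, u)) (tens \<beta> V)"], (rule linI; simp add: distrib_left)+) (simp add: 1)
  have 3: "brAPT (tens (basis a) U) (tens \<beta> V) = tens (basis a * \<beta>) (tbr U V)" for a
    by (rule lin_eq[where La = "\<lambda>U. brAPT (tens (basis a) U) (tens \<beta> V)"], (rule linI; simp)+) (simp add: 2)
  show ?thesis
    by (rule lin_eq[where La = "\<lambda>\<alpha>. brAPT (tens \<alpha> U) (tens \<beta> V)"], (rule linI; simp add: distrib_right)+) (simp add: 3)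
qed

lemma tri_add_left [simp]: "triAPT (X + Y) Z = triAPT X Z + triAPT Y Z" by (simp add: triAPT_def)
lemma tri_sc_left [simp]: "triAPT (sc c X) Z = sc c (triAPT X Z)" by (simp add: triAPT_def)
lemma tri_zero_left [simp]: "triAPT 0 Z = 0" by (simp add: triAPT_def)
lemma tri_minus_left [simp]: "triAPT (- X) Z = - triAPT X Z" by (simp add: triAPT_def)
lemma tri_diff_left [simp]: "triAPT (X - Y) Z = triAPT X Z - triAPT Y Z" by (simp add: triAPT_def)
lemma tri_add_right [simp]: "triAPT X (Y + Z) = triAPT X Y + triAPT X Z" by (simp add: triAPT_def)
lemma tri_sc_right [simp]: "triAPT X (sc c Y) = sc c (triAPT X Y)" by (simp add: triAPT_def)
lemma tri_zero_right [simp]: "triAPT X 0 = 0" by (simp add: triAPT_def)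
lemma tri_minus_right [simp]: "triAPT X (- Y) = - triAPT X Y" by (simp add: triAPT_def)
lemma tri_diff_right [simp]: "triAPT X (Y - Z) = triAPT X Y - triAPT X Z" by (simp add: triAPT_def)
lemma tri_basis [simp]: "triAPT (basis (a, u)) (basis (b, v)) =
   tens (basis a * R.W u (basis b)) (basis v) + tens (basis (a + b)) (A.Phi (basis u) (basis v))"
  by (simp add: triAPT_def rhoW_eq actT_eq)

lemma tri_tens: "triAPT (tens \<alpha> U) (tens \<beta> V) = tens (\<alpha> * R.Phi U \<beta>) V + tens (\<alpha> * \<beta>) (A.Phi U V)"
proof -
  have 1: "triAPT (basis (a, u)) (tens (basis b) V) = tens (basis a * R.Phi (basis u) (basis b)) V + tens (basis a * basis b) (A.Phi (basis u) V)" for a u b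
    by (rule lin_eq[where La = "\<lambda>V. triAPT (basis (a, u)) (tens (basis b) V)"], (rule linI; simp)+) simp
  have 2: "triAPT (basis (a, u)) (tens \<beta> V) = tens (basis a * R.Phi (basis u) \<beta>) V + tens (basis a * \<beta>) (A.Phi (basis u) V)" for a u
    by (rule lin_eq[where La = "\<lambda>\<beta>. triAPT (basis (a, u)) (tens \<beta> V)"], (rule linI; simp add: distrib_left)+) (simp add: 1)
  have 3: "triAPT (tens (basis a) U) (tens \<beta> V) = tens (basis a * R.Phi U \<beta>) V + tens (basis a * \<beta>) (A.Phi U V)" for a
    by (rule lin_eq[where La = "\<lambda>U. triAPT (tens (basis a) U) (tens \<beta> V)"], (rule linI; simp add: distrib_left)+) (simp add: 2)
  show ?thesis
    by (rule lin_eq[where La = "\<lambda>\<alpha>. triAPT (tens \<alpha> U) (tens \<beta> V)"], (rule linI; simp add: distrib_right)+) (simp add: 3)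
qed

lemma tri_rmult_left: "triAPT (rmult f X) Y = rmult f (triAPT X Y)"
proof -
  have 1: "triAPT (rmult f (basis x)) (basis y) = rmult f (triAPT (basis x) (basis y))" for x y
  proof -
    obtain a u where x: "x = (a, u)" by force
    obtain b v where y: "y = (b, v)" by force
    have "triAPT (rmult f (tens (basis a) (basis u))) (tens (basis b) (basis v))
        = rmult f (triAPT (tens (basis a) (basis u)) (tens (basis b) (basis v)))"
      by (simp only: rmult_tens tri_tens rmult_add_right mult.assoc)
    then show ?thesis by (simp only: x y tens_basis)
  qed
  have 2: "triAPT (rmult f (basis x)) Y = rmult f (triAPT (basis x) Y)" for x
    by (rule lin_eq[where La = "\<lambda>Y. triAPT (rmult f (basis x)) Y"], (rule linI; simp)+) (rule 1)
  show ?thesis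
    by (rule lin_eq[where La = "\<lambda>X. triAPT (rmult f X) Y"], (rule linI; simp)+) (rule 2)
qed


lemma rmult_zero_left [simp]: "rmult 0 X = 0"
  using rmult_sc_left[of 0 0 X] by simp
lemma rmult_minus_left [simp]: "rmult (- f) X = - rmult f X"
  using rmult_sc_left[of "-1" f X] by (simp add: sc_minus_left)
lemma rmult_diff_left [simp]: "rmult (f - g) X = rmult f X - rmult g X"
  using rmult_add_left[of f "- g" X] by simp

lemma APT_ind1:
  fixes T :: "'k::comm_ring_1 APTT \<Rightarrow> 'b::ab_group_add"
  assumes "X \<in> APT" "T 0 = (0 :: 'b :: ab_group_add)" "\<And>X Y. T (X + Y) = T X + T Y"
    "\<And>\<alpha> F. F \<in> lie_pt \<Longrightarrow> T (tens \<alpha> F) = 0"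
  shows "T X = 0"
  using assms(1) by (induction rule: APT.induct) (simp_all add: assms(2-4))

lemma APT_ind2:
  fixes T :: "'k::comm_ring_1 APTT \<Rightarrow> 'k APTT \<Rightarrow> 'b::ab_group_add"
  assumes "X \<in> APT" "Y \<in> APT"
    "\<And>Y. T 0 Y = (0 :: 'b :: ab_group_add)" "\<And>X1 X2 Y. T (X1 + X2) Y = T X1 Y + T X2 Y"
    "\<And>X. T X 0 = 0" "\<And>X Y1 Y2. T X (Y1 + Y2) = T X Y1 + T X Y2"
    "\<And>\<alpha> F \<beta> G. F \<in> lie_pt \<Longrightarrow> G \<in> lie_pt \<Longrightarrow> T (tens \<alpha> F) (tens \<beta> G) = 0"
  shows "T X Y = 0"
proof (rule APT_ind1[where T = "\<lambda>X. T X Y", OF assms(1)])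
  fix \<alpha> :: "'k SPA" and F :: "'k TPT" assume F: "F \<in> lie_pt"
  show "T (tens \<alpha> F) Y = 0"
    by (rule APT_ind1[where T = "\<lambda>Y. T (tens \<alpha> F) Y", OF assms(2)]) (simp_all add: assms(5-7) F)
qed (simp_all add: assms(3,4))

lemma APT_ind3:
  fixes T :: "'k::comm_ring_1 APTT \<Rightarrow> 'k APTT \<Rightarrow> 'k APTT \<Rightarrow> 'b::ab_group_add"
  assumes "X \<in> APT" "Y \<in> APT" "Z \<in> APT"
    "\<And>Y Z. T 0 Y Z = (0 :: 'b :: ab_group_add)" "\<And>X1 X2 Y Z. T (X1 + X2) Y Z = T X1 Y Z + T X2 Y Z"
    "\<And>X Z. T X 0 Z = 0" "\<And>X Y1 Y2 Z. T X (Y1 + Y2) Z = T X Y1 Z + T X Y2 Z"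
    "\<And>X Y. T X Y 0 = 0" "\<And>X Y Z1 Z2. T X Y (Z1 + Z2) = T X Y Z1 + T X Y Z2"
    "\<And>\<alpha> F \<beta> G \<gamma> H. F \<in> lie_pt \<Longrightarrow> G \<in> lie_pt \<Longrightarrow> H \<in> lie_pt \<Longrightarrow>
       T (tens \<alpha> F) (tens \<beta> G) (tens \<gamma> H) = 0"
  shows "T X Y Z = 0"
proof (rule APT_ind1[where T = "\<lambda>X. T X Y Z", OF assms(1)])
  fix \<alpha> :: "'k SPA" and F :: "'k TPT" assume F: "F \<in> lie_pt"
  show "T (tens \<alpha> F) Y Z = 0"
    by (rule APT_ind2[where T = "\<lambda>Y Z. T (tens \<alpha> F) Y Z", OF assms(2,3)]) (simp_all add: assms(6-10) F)
qed (simp_all add: assms(4,5))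

lemma APT_tens: "F \<in> lie_pt \<Longrightarrow> tens \<alpha> F \<in> APT"
  by (rule APT.gen)

lemma APT_minus: "X \<in> APT \<Longrightarrow> - X \<in> APT"
proof (induction rule: APT.induct)
  case (gen F \<alpha>)
  have "tens (- \<alpha>) F \<in> APT" using gen by (rule APT.gen)
  then show ?case by simp
next
  case (add X Y)
  have "- X + - Y \<in> APT" using add by (intro APT.add)
  then show ?case by simp
qed (auto intro: APT.intros)

lemma APT_diff: "X \<in> APT \<Longrightarrow> Y \<in> APT \<Longrightarrow> X - Y \<in> APT"
  using APT.add[OF _ APT_minus, of X Y] by simp

lemma APT_rmult: "X \<in> APT \<Longrightarrow> rmult f X \<in> APT"
  by (induction rule: APT.induct) (auto intro: APT.intros simp: rmult_tens)

lemma APT_br: "X \<in> APT \<Longrightarrow> Y \<in> APT \<Longrightarrow> brAPT X Y \<in> APT"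
proof (induction rule: APT.induct)
  case (gen F \<alpha>)
  from gen(2) show ?case
    by (induction rule: APT.induct) (auto intro: APT.intros lie_pt.br gen(1) simp: br_tens)
qed (auto intro: APT.intros)

lemma APT_tri: "X \<in> APT \<Longrightarrow> Y \<in> APT \<Longrightarrow> triAPT X Y \<in> APT"
proof (induction rule: APT.induct)
  case (gen F \<alpha>)
  from gen(2) show ?case
    by (induction rule: APT.induct) (auto intro: APT.intros lie_act gen(1) simp: tri_tens)
qed (auto intro: APT.intros)

lemma APT_dbr: "X \<in> APT \<Longrightarrow> Y \<in> APT \<Longrightarrow> dbrAPT X Y \<in> APT"
  unfolding dbrAPT_def by (intro APT.add APT_diff APT_tri APT_br)


lemma rho_rmult: "rhoAPT (rmult f X) g = f * rhoAPT X g"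
  by (rule lin_eq[where La = "\<lambda>X. rhoAPT (rmult f X) g"], (rule linI; simp add: distrib_left)+)
     (case_tac x, simp add: rho_tens mult.assoc)

lemma dbr_add_left [simp]: "dbrAPT (X + Y) Z = dbrAPT X Z + dbrAPT Y Z"
  by (simp add: dbrAPT_def algebra_simps)
lemma dbr_add_right [simp]: "dbrAPT X (Y + Z) = dbrAPT X Y + dbrAPT X Z"
  by (simp add: dbrAPT_def algebra_simps)
lemma dbr_sc_left [simp]: "dbrAPT (sc c X) Z = sc c (dbrAPT X Z)"
  by (simp add: dbrAPT_def)
lemma dbr_sc_right [simp]: "dbrAPT X (sc c Z) = sc c (dbrAPT X Z)"
  by (simp add: dbrAPT_def)
lemma dbr_zero_left [simp]: "dbrAPT 0 Z = 0"
  by (simp add: dbrAPT_def)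
lemma dbr_zero_right [simp]: "dbrAPT X 0 = 0"
  by (simp add: dbrAPT_def)

lemma conn_leibniz:
  assumes "X \<in> APT" "Y \<in> APT"
  shows "triAPT X (rmult f Y) = rmult (rhoAPT X f) Y + rmult f (triAPT X Y)"
proof -
  have "triAPT X (rmult f Y) - (rmult (rhoAPT X f) Y + rmult f (triAPT X Y)) = 0"
    by (rule APT_ind2[where T = "\<lambda>X Y. triAPT X (rmult f Y) - (rmult (rhoAPT X f) Y + rmult f (triAPT X Y))", OF assms])
       (simp_all add: algebra_simps tri_tens rmult_tens rho_tens lie_rder)
  then show ?thesis by simp
qed

lemma dbr_leibniz:
  assumes "X \<in> APT" "Y \<in> APT"
  shows "dbrAPT X (rmult f Y) = rmult (rhoAPT X f) Y + rmult f (dbrAPT X Y)"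
proof -
  have "dbrAPT X (rmult f Y) - (rmult (rhoAPT X f) Y + rmult f (dbrAPT X Y)) = 0"
    by (rule APT_ind2[where T = "\<lambda>X Y. dbrAPT X (rmult f Y) - (rmult (rhoAPT X f) Y + rmult f (dbrAPT X Y))", OF assms])
       (simp_all add: dbrAPT_def algebra_simps tri_tens br_tens rmult_tens rho_tens lie_rder)
  then show ?thesis by simp
qed

lemma rho_der:
  assumes "X \<in> APT"
  shows "rhoAPT X (f * g) = rhoAPT X f * g + f * rhoAPT X g"
proof -
  have "rhoAPT X (f * g) - (rhoAPT X f * g + f * rhoAPT X g) = 0"
    by (rule APT_ind1[where T = "\<lambda>X. rhoAPT X (f * g) - (rhoAPT X f * g + f * rhoAPT X g)", OF assms])
       (simp_all add: algebra_simps rho_tens lie_rder)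
  then show ?thesis by simp
qed

lemma rho_morph:
  assumes "X \<in> APT" "Y \<in> APT"
  shows "rhoAPT (dbrAPT X Y) g = rhoAPT X (rhoAPT Y g) - rhoAPT Y (rhoAPT X g)"
proof -
  have "rhoAPT (dbrAPT X Y) g - (rhoAPT X (rhoAPT Y g) - rhoAPT Y (rhoAPT X g)) = 0"
    by (rule APT_ind2[where T = "\<lambda>X Y. rhoAPT (dbrAPT X Y) g - (rhoAPT X (rhoAPT Y g) - rhoAPT Y (rhoAPT X g))", OF assms])
       (simp_all add: dbrAPT_def algebra_simps tri_tens br_tens rho_tens lie_rder lie_rho_tbr)
  then show ?thesis by simp
qed


lemma flat:
  assumes "X \<in> APT" "Y \<in> APT" "Z \<in> APT"
  shows "triAPT X (triAPT Y Z) - triAPT Y (triAPT X Z) - triAPT (dbrAPT X Y) Z = 0"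
  by (rule APT_ind3[where T = "\<lambda>X Y Z. triAPT X (triAPT Y Z) - triAPT Y (triAPT X Z) - triAPT (dbrAPT X Y) Z", OF assms])
     (simp_all add: dbrAPT_def algebra_simps tri_tens br_tens lie_rder lie_act_tbr lie_rho_tbr)

lemma tri_br:
  assumes "X \<in> APT" "Y \<in> APT" "Z \<in> APT"
  shows "triAPT X (brAPT Y Z) = brAPT (triAPT X Y) Z + brAPT Y (triAPT X Z)"
proof -
  have "triAPT X (brAPT Y Z) - (brAPT (triAPT X Y) Z + brAPT Y (triAPT X Z)) = 0"
    by (rule APT_ind3[where T = "\<lambda>X Y Z. triAPT X (brAPT Y Z) - (brAPT (triAPT X Y) Z + brAPT Y (triAPT X Z))", OF assms])
       (simp_all add: algebra_simps tri_tens br_tens lie_rder lie_tbr_der)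
  then show ?thesis by simp
qed

lemma br_anti:
  assumes "X \<in> APT" "Y \<in> APT"
  shows "brAPT Y X = - brAPT X Y"
proof -
  have "brAPT Y X + brAPT X Y = 0"
    by (rule APT_ind2[where T = "\<lambda>X Y. brAPT Y X + brAPT X Y", OF assms])
       (simp_all add: algebra_simps br_tens tbr_def)
  then show ?thesis by (simp add: eq_neg_iff_add_eq_0)
qed

lemma br_self:
  assumes "X \<in> APT"
  shows "brAPT X X = 0"
  using assms
proof (induction rule: APT.induct)
  case (add X Y)
  then show ?case using br_anti[of X Y] by simp
qed (simp_all add: br_tens)

lemma br_jacobi:
  assumes "X \<in> APT" "Y \<in> APT" "Z \<in> APT"
  shows "brAPT X (brAPT Y Z) + brAPT Y (brAPT Z X) + brAPT Z (brAPT X Y) = 0"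
  by (rule APT_ind3[where T = "\<lambda>X Y Z. brAPT X (brAPT Y Z) + brAPT Y (brAPT Z X) + brAPT Z (brAPT X Y)", OF assms])
     (simp_all add: algebra_simps br_tens tbr_def tmul_assoc)

lemma dbr_expand:
  assumes "X \<in> APT" "Y \<in> APT" "Z \<in> APT"
  shows "dbrAPT X (dbrAPT Y Z) = triAPT X (triAPT Y Z) - triAPT X (triAPT Z Y) - triAPT Y (triAPT Z X)
     + triAPT Z (triAPT Y X) + brAPT (triAPT X Y) Z + brAPT Y (triAPT X Z) + brAPT X (triAPT Y Z)
     - brAPT X (triAPT Z Y) + brAPT X (brAPT Y Z)"
proof -
  have D: "dbrAPT U V = triAPT U V - triAPT V U + brAPT U V" for U V by (simp add: dbrAPT_def)
  have fl: "triAPT (dbrAPT Y Z) X = triAPT Y (triAPT Z X) - triAPT Z (triAPT Y X)"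
    using flat[OF assms(2,3,1)] by (simp add: algebra_simps)
  have 1: "dbrAPT X (dbrAPT Y Z) = triAPT X (dbrAPT Y Z) - triAPT (dbrAPT Y Z) X + brAPT X (dbrAPT Y Z)"
    by (rule D)
  have 2: "triAPT X (dbrAPT Y Z) = triAPT X (triAPT Y Z) - triAPT X (triAPT Z Y) + triAPT X (brAPT Y Z)"
    by (simp add: dbrAPT_def)
  have 3: "brAPT X (dbrAPT Y Z) = brAPT X (triAPT Y Z) - brAPT X (triAPT Z Y) + brAPT X (brAPT Y Z)"
    by (simp add: dbrAPT_def)
  show ?thesis
    unfolding 1 2 3 fl tri_br[OF assms] by (simp add: algebra_simps)
qed

lemma dbr_jacobi:
  assumes X: "X \<in> APT" and Y: "Y \<in> APT" and Z: "Z \<in> APT"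
  shows "dbrAPT X (dbrAPT Y Z) + dbrAPT Y (dbrAPT Z X) + dbrAPT Z (dbrAPT X Y) = 0"
proof -
  have a1: "brAPT (triAPT X Y) Z = - brAPT Z (triAPT X Y)" by (rule br_anti[OF Z APT_tri[OF X Y]])
  have a2: "brAPT (triAPT Y Z) X = - brAPT X (triAPT Y Z)" by (rule br_anti[OF X APT_tri[OF Y Z]])
  have a3: "brAPT (triAPT Z X) Y = - brAPT Y (triAPT Z X)" by (rule br_anti[OF Y APT_tri[OF Z X]])
  have "dbrAPT X (dbrAPT Y Z) + dbrAPT Y (dbrAPT Z X) + dbrAPT Z (dbrAPT X Y)
      = brAPT X (brAPT Y Z) + brAPT Y (brAPT Z X) + brAPT Z (brAPT X Y)"
    unfolding dbr_expand[OF X Y Z] dbr_expand[OF Y Z X] dbr_expand[OF Z X Y] a1 a2 a3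
    by (simp add: algebra_simps)
  also have "\<dots> = 0" by (rule br_jacobi[OF X Y Z])
  finally show ?thesis .
qed

lemma dbr_self: "X \<in> APT \<Longrightarrow> dbrAPT X X = 0"
  by (simp add: dbrAPT_def br_self)

lemma tors_eq: "torsion dbrAPT triAPT Y Z = - brAPT Y Z"
  by (simp add: torsion_def dbrAPT_def)

theorem mainTheorem4:
  shows "post_lie_rinehart (sc :: 'k::field \<Rightarrow> 'k SPA \<Rightarrow> 'k SPA) (APT :: 'k APTT set) sc rmult
           dbrAPT rhoAPT triAPT"
  unfolding post_lie_rinehart_def lie_rinehart_def is_connection_def is_derivation_def curvature_def tors_eq
  by (auto simp: APT.zero APT.add APT_minus APT_rmult rmult_mult rmult_one sc_rmult[symmetric]
        APT_dbr dbr_self dbr_jacobi rho_der rho_rmult rho_morph dbr_leibniz APT_tri tri_rmult_left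
        conn_leibniz flat tri_br APT_br)


end
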